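(* Let $p>3$ be a prime and let $L_1(x),L_2(x),L_3(x)\in\mathbb{F}_{p^r}[x]$ be additive polynomials. If $A(x)=L_1(x)L_2(x)L_3(x)$ is an Alltop polynomial on $\mathbb{F}_{p^r}$, then $L_1(x),L_2(x),L_3(x)$ are all permutation polynomials of $\mathbb{F}_{p^r}$.
   Context: For $f:\mathbb{F}_{p^r}\to\mathbb{F}_{p^r}$ and $a\in\mathbb{F}_{p^r}$, $\Delta_{f,a}(x)=f(x+a)-f(x)$. A function $f$ is planar if for every $a\in\mathbb{F}_{p^r}^*$ the map $x\mapsto\Delta_{f,a}(x)$ is a bijection; $A$ is an Alltop polynomial if $\Delta_{A,a}$ is planar for every $a\in\mathbb{F}_{p^r}^*$. A polynomial $L$ is additive if $L(x+y)=L(x)+L(y)$ for all $x,y\in\mathbb{F}_{p^r}$. *)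

theory Defs
  imports "HOL-Computational_Algebra.Polynomial"
begin

definition diff_op :: "('a::ring \<Rightarrow> 'a) \<Rightarrow> 'a \<Rightarrow> 'a \<Rightarrow> 'a" where
  "diff_op f a = (\<lambda>x. f (x + a) - f x)"

definition planar :: "('a::ring \<Rightarrow> 'a) \<Rightarrow> bool" where
  "planar f \<longleftrightarrow> (\<forall>a. a \<noteq> 0 \<longrightarrow> bij (diff_op f a))"

definition alltop :: "('a::ring \<Rightarrow> 'a) \<Rightarrow> bool" where
  "alltop A \<longleftrightarrow> (\<forall>a. a \<noteq> 0 \<longrightarrow> planar (diff_op A a))"

definition additive_poly :: "'a::comm_ring poly \<Rightarrow> bool" where
  "additive_poly L \<longleftrightarrow> (\<forall>x y. poly L (x + y) = poly L x + poly L y)"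

definition permutation_poly :: "'a::comm_ring poly \<Rightarrow> bool" where
  "permutation_poly L \<longleftrightarrow> bij (poly L)"

end

theory Submission
  imports Defs
begin

lemma key:
  fixes A :: "'a::field \<Rightarrow> 'a" and a :: 'a
  assumes "a \<noteq> 0" "A 0 = 0" "A a = 0" "A (a + a) = 0" "A (a + a + a) = 0"
    and "alltop A"
  shows False
proof -
  have "bij (diff_op (diff_op A a) a)" using assms(1,6) unfolding alltop_def planar_def by blast
  hence "inj (diff_op (diff_op A a) a)" by (rule bij_is_inj)
  moreover have "diff_op (diff_op A a) a 0 = diff_op (diff_op A a) a a"
    using assms(2-5) by (simp add: diff_op_def)
  ultimately have "0 = a" by (meson injD)
  thus False using assms(1) by simp
qed

lemma kernel:
  fixes L :: "'a::{field,finite} poly"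
  assumes "additive_poly L" "\<not> bij (poly L)"
  shows "\<exists>a. a \<noteq> 0 \<and> poly L a = 0"
proof -
  have add: "\<And>x y. poly L (x + y) = poly L x + poly L y" using assms(1) unfolding additive_poly_def by blast
  have "\<not> inj (poly L)" using assms(2) finite_UNIV_inj_surj bij_def by (metis finite_class.finite_UNIV)
  then obtain x y where xy: "x \<noteq> y" "poly L x = poly L y" unfolding inj_def by blast
  have "poly L x = poly L (x - y) + poly L y" using add[of "x - y" y] by simp
  hence "poly L (x - y) = 0" using xy by simp
  thus ?thesis using xy by (intro exI[of _ "x - y"]) simp
qed

lemma zero0:
  fixes L :: "'a::{field} poly"
  assumes "additive_poly L" shows "poly L 0 = 0"
  using assms unfolding additive_poly_def by (metis add_cancel_right_right add_0)

lemma zeros: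
  fixes L :: "'a::{field} poly"
  assumes "additive_poly L" "poly L a = 0"
  shows "poly L 0 = 0" "poly L (a + a) = 0" "poly L (a + a + a) = 0"
proof -
  have add: "\<And>x y. poly L (x + y) = poly L x + poly L y" using assms(1) unfolding additive_poly_def by blast
  show "poly L 0 = 0" using zero0[OF assms(1)] .
  show "poly L (a + a) = 0" using add[of a a] assms(2) by simp
  show "poly L (a + a + a) = 0" using add[of "a+a" a] add[of a a] assms(2) by simp
qed

lemma one:
  fixes L1 L2 L3 :: "'a::{field, finite} poly"
  assumes "additive_poly L1" "alltop (poly (L1 * L2 * L3))"
  shows "permutation_poly L1"
proof (rule ccontr)
  assume "\<not> permutation_poly L1"
  then obtain a where a: "a \<noteq> 0" "poly L1 a = 0"
    using kernel[OF assms(1)] unfolding permutation_poly_def by blast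
  show False
    apply (rule key[OF a(1) _ _ _ _ assms(2)])
    using zeros[OF assms(1) a(2)] a(2) by simp_all
qed

theorem theorem3:
  fixes L1 L2 L3 :: "'a::{field, finite} poly" and p r :: nat
  assumes "prime p" and "p > 3" and "card (UNIV :: 'a set) = p ^ r"
    and "additive_poly L1" and "additive_poly L2" and "additive_poly L3"
    and "alltop (poly (L1 * L2 * L3))"
  shows "permutation_poly L1 \<and> permutation_poly L2 \<and> permutation_poly L3"
proof -
  have e2: "L1 * L2 * L3 = L2 * L1 * L3" by (simp add: ac_simps)
  have e3: "L1 * L2 * L3 = L3 * L1 * L2" by (simp add: ac_simps)
  show ?thesis
    using one[OF assms(4) assms(7)] one[OF assms(5), of L1 L3] one[OF assms(6), of L1 L2]
      assms(7) e2 e3 by metis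
qed

end
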